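(* Let $n_1,n_2,n_3$ be pairwise coprime positive integers forming a minimal system of generators of $\mathcal S=\langle n_1,n_2,n_3\rangle$, and let $\{i,j,k\}=\{1,2,3\}$. Let $\lambda_{ij}=[-n_in_j^{-1}]_{n_k}$, $\lambda_{ik}=[-n_in_k^{-1}]_{n_j}$ (so that $n_i=n_jn_k-\lambda_{ij}n_j-\lambda_{ik}n_k$), and put $N_i=n_jn_k-\lambda_{ij}n_j-n_k$. Let $\mathcal T_k=\{x\in\mathbb N: xn_k\in\langle n_j,N_i\rangle\}$. Then $$\mathcal S_k=\{\,x-(\lambda_{ik}-1)[-x]_{n_j}\ :\ x\in\mathcal T_k\,\}.$$
   Context: $\mathbb N$ denotes the nonnegative integers. For integers $a_1,\dots,a_r$, $\langle a_1,\dots,a_r\rangle=\{\sum t_la_l: t_l\in\mathbb N\}$. Minimal system of generators means that no $n_l$ belongs to the monoid generated by the other two. For an integer $m$ and $n\ge 1$, $[m]_n\in\{0,\dots,n-1\}$ denotes the remainder of $m$ upon division by $n$; for $a$ coprime to $n$, the symbol $a^{-1}$ inside $[\cdot]_n$ denotes a multiplicative inverse of $a$ modulo $n$. For $\{i,j,k\}=\{1,2,3\}$, $\mathcal S_k=\{M\in\mathbb N: Mn_k\in\langle n_i,n_j\rangle\}$ and $c_k=\min(\mathcal S_k\setminus\{0\})$ (the minimal relation for $n_k$). *)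

theory Defs
  imports "HOL-Number_Theory.Number_Theory"
begin

definition gen2 :: "int \<Rightarrow> int \<Rightarrow> int set" where
  "gen2 a b = {int s * a + int t * b | s t :: nat. True}"

definition Sset :: "int \<Rightarrow> int \<Rightarrow> int \<Rightarrow> nat set" where
  "Sset ni nj nk = {M :: nat. int M * nk \<in> gen2 ni nj}"

definition lam :: "int \<Rightarrow> int \<Rightarrow> int \<Rightarrow> int" where
  "lam m n p = (- m * modular_inverse p n) mod p"

end

theory Submission
  imports Defs
begin

lemma gen2_sym: "gen2 a b = gen2 b a"
  unfolding gen2_def by (auto simp: add.commute) (metis add.commute)+

lemma lam_bounds: "(p::int) > 0 \<Longrightarrow> 0 \<le> lam m n p \<and> lam m n p < p"
  by (simp add: lam_def)

lemma lam_cong: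
  fixes m n p :: int
  assumes "coprime n p"
  shows "[lam m n p * n = -m] (mod p)"
proof -
  have "[lam m n p = -m * modular_inverse p n] (mod p)" unfolding lam_def by (simp add: cong_def)
  then have "[lam m n p * n = -m * modular_inverse p n * n] (mod p)" by (rule cong_scalar_right)
  also have "[-m * modular_inverse p n * n = -m * 1] (mod p)"
    using cong_scalar_left[OF cong_modular_inverse2[OF assms], of "-m"] by (simp add: mult.assoc)
  finally show ?thesis by simp
qed

lemma cong_dvd_sum: "[(x::int) = -m] (mod p) \<Longrightarrow> p dvd x + m"
  by (metis cong_iff_dvd_diff diff_minus_eq_add)

lemma key:
  fixes a b c :: int
  assumes a: "a > 0" and b: "b > 0" and c: "c > 0" and bc: "coprime b c"
    and mina: "a \<notin> gen2 b c"
  shows "a + lam a b c * b + lam a c b * c = b * c"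
proof -
  define l where "l = lam a b c"
  define u where "u = lam a c b"
  have l: "0 \<le> l" "l < c" using lam_bounds[OF c] l_def by auto
  have u: "0 \<le> u" "u < b" using lam_bounds[OF b] u_def by auto
  have "c dvd l * b + a" unfolding l_def
    by (rule cong_dvd_sum, rule lam_cong) (use bc in \<open>simp add: coprime_commute\<close>)
  then have d1: "c dvd a + l * b + u * c" by (simp add: add.commute)
  have "b dvd u * c + a" unfolding u_def
    by (rule cong_dvd_sum, rule lam_cong) (use bc in \<open>simp add: coprime_commute\<close>)
  then have d2: "b dvd a + l * b + u * c" by (metis add.commute dvd_add_right_iff dvd_triv_right add.assoc)
  have "b * c dvd a + l * b + u * c" using d1 d2 bc by (simp add: divides_mult)
  then obtain t where t: "a + l * b + u * c = b * c * t" by blast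
  have "b * c * t > 0" using t a l u b c by (smt (verit) mult_nonneg_nonneg)
  then have t1: "t \<ge> 1" using b c by (smt (verit) mult_pos_pos zero_less_mult_pos)
  show ?thesis
  proof (cases "t = 1")
    case True then show ?thesis using t l_def u_def by simp
  next
    case False
    then have t2: "t \<ge> 2" using t1 by simp
    have e: "a = int (nat (c - l)) * b + int (nat ((t - 1) * b - u)) * c"
    proof -
      have "(t - 1) * b \<ge> 1 * b" using t2 b by (intro mult_right_mono) auto
      then have "(t - 1) * b - u \<ge> 0" using u by linarith
      then have "a = (c - l) * b + ((t - 1) * b - u) * c" using l t by (simp add: algebra_simps)
      then show ?thesis using l \<open>(t - 1) * b - u \<ge> 0\<close> by simp
    qed
    have "a \<in> gen2 b c" unfolding gen2_def using e by blast
    then show ?thesis using mina by simp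
  qed
qed


lemma cop_dvd: "coprime (b::int) c \<Longrightarrow> b dvd y * c \<Longrightarrow> b dvd y"
  using coprime_dvd_mult_left_iff by blast

lemma mainset:
  fixes a b c :: int
  assumes a: "a > 0" and b: "b > 0" and c: "c > 0" and bc: "coprime b c"
    and mina: "a \<notin> gen2 b c"
  shows "int ` Sset a b c =
     {int x - (lam a c b - 1) * ((- int x) mod b) | x. x \<in> {x :: nat. int x * c \<in> gen2 b (b * c - lam a b c * b - c)}}"
proof -
  define l where "l = lam a b c"
  define u where "u = lam a c b"
  define N where "N = b * c - l * b - c"
  have l: "0 \<le> l" "l < c" using lam_bounds[OF c] l_def by auto
  have u: "0 \<le> u" "u < b" using lam_bounds[OF b] u_def by auto
  have sum: "a + l * b + u * c = b * c" using key[OF assms] l_def u_def by simp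
  have u1: "u \<ge> 1"
  proof (rule ccontr)
    assume "\<not> u \<ge> 1"
    then have "u = 0" using u by simp
    then have "a = int (nat (c - l)) * b + int 0 * c" using sum l by (simp add: algebra_simps)
    then have "a \<in> gen2 b c" unfolding gen2_def by blast
    then show False using mina by simp
  qed
  have NE: "N = a + (u - 1) * c" using sum unfolding N_def by (simp add: algebra_simps)
  have Npos: "N > 0" using NE u1 a c by (simp add: add_pos_nonneg)
  have Nmod: "b dvd N + c" unfolding N_def by (simp add: algebra_simps)
  show ?thesis unfolding l_def[symmetric] u_def[symmetric] N_def[symmetric]
  proof (rule equalityI; rule subsetI)
    fix y assume "y \<in> int ` Sset a b c"
    then obtain M s t where yM: "y = int M" and Me: "int M * c = int s * a + int t * b"
      unfolding Sset_def gen2_def by auto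
    define r where "r = int s mod b"
    have r: "0 \<le> r" "r < b" using b r_def by auto
    obtain q where q: "int s = r + b * q" "q \<ge> 0"
      by (rule that[of "int s div b"]) (use b in \<open>simp_all add: r_def div_int_pos_iff\<close>)
    define T where "T = q * a + int t"
    have T: "T \<ge> 0" unfolding T_def using q a by simp
    define X where "X = int M + (u - 1) * r"
    have X0: "X \<ge> 0" unfolding X_def using u1 r by simp
    have Xe: "X * c = r * N + T * b"
      unfolding X_def T_def NE using Me q by (simp add: algebra_simps)
    have "(X + r) * c = r * (N + c) + T * b" using Xe by (simp add: algebra_simps)
    then have "b dvd (X + r) * c" using Nmod by simp
    then have "b dvd X + r" using cop_dvd bc by blast
    then have "b dvd (- X) - r" by (metis dvd_minus_iff minus_diff_eq diff_minus_eq_add add.commute)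
    then have "(- X) mod b = r mod b" by (simp add: mod_eq_dvd_iff)
    then have rx: "(- X) mod b = r" using r by simp
    have "int (nat X) * c = int (nat r) * N + int (nat T) * b" using Xe X0 r T by simp
    then have "int (nat X) * c = int (nat T) * b + int (nat r) * N" by simp
    then have "int (nat X) * c \<in> gen2 b N" unfolding gen2_def by blast
    moreover have "y = int (nat X) - (u - 1) * ((- int (nat X)) mod b)"
      using X0 rx yM unfolding X_def by simp
    ultimately show "y \<in> {int x - (u - 1) * ((- int x) mod b) | x. x \<in> {x :: nat. int x * c \<in> gen2 b N}}"
      by blast
  next
    fix y assume "y \<in> {int x - (u - 1) * ((- int x) mod b) | x. x \<in> {x :: nat. int x * c \<in> gen2 b N}}"
    then obtain x s t where y: "y = int x - (u - 1) * ((- int x) mod b)"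
      and xe: "int x * c = int s * b + int t * N" unfolding gen2_def by auto
    define r where "r = (- int x) mod b"
    have r: "0 \<le> r" "r < b" using b r_def by auto
    have "(int x + int t) * c = int s * b + int t * (N + c)" using xe by (simp add: algebra_simps)
    then have "b dvd (int x + int t) * c" using Nmod by simp
    then have "b dvd int x + int t" using cop_dvd bc by blast
    then have "b dvd int t - (- int x)" by (simp add: add.commute)
    then have "int t mod b = r" unfolding r_def by (simp add: mod_eq_dvd_iff)
    then obtain q where q: "int t = r + b * q" "q \<ge> 0"
      by (metis add.commute b div_int_pos_iff mult_div_mod_eq of_nat_0_le_iff order_less_imp_le)
    define T where "T = q * N + int s"
    have T: "T \<ge> 0" unfolding T_def using q Npos by simp
    define M where "M = int x - (u - 1) * r"
    have Me: "M * c = r * a + T * b"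
      unfolding M_def T_def NE using xe[unfolded NE] q by (simp add: algebra_simps)
    have "M * c \<ge> 0" using Me r T a b by simp
    then have M0: "M \<ge> 0" using c by (simp add: zero_le_mult_iff)
    have "int (nat M) * c = int (nat r) * a + int (nat T) * b" using Me M0 r T by simp
    then have "nat M \<in> Sset a b c" unfolding Sset_def gen2_def by blast
    moreover have "y = int (nat M)" using M0 y unfolding M_def r_def by simp
    ultimately show "y \<in> int ` Sset a b c" by blast
  qed
qed

theorem mainTheorem3:
  fixes n :: "nat \<Rightarrow> int" and i j k :: nat
  assumes pos: "\<And>l. l \<in> {1,2,3} \<Longrightarrow> n l > 0"
    and coprime: "\<And>l m. l \<in> {1,2,3} \<Longrightarrow> m \<in> {1,2,3} \<Longrightarrow> l \<noteq> m \<Longrightarrow> coprime (n l) (n m)"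
    and minimal: "n 1 \<notin> gen2 (n 2) (n 3)" "n 2 \<notin> gen2 (n 1) (n 3)" "n 3 \<notin> gen2 (n 1) (n 2)"
    and ijk: "{i, j, k} = {1, 2, 3}"
  shows "let lij = lam (n i) (n j) (n k);
             lik = lam (n i) (n k) (n j);
             Ni = n j * n k - lij * n j - n k;
             Tk = {x :: nat. int x * n k \<in> gen2 (n j) Ni}
         in int ` Sset (n i) (n j) (n k) =
            {int x - (lik - 1) * ((- int x) mod n j) | x. x \<in> Tk}"
proof -
  have mem: "i \<in> {1,2,3}" "j \<in> {1,2,3}" "k \<in> {1,2,3}" using ijk by blast+
  have dist: "i \<noteq> j" "i \<noteq> k" "j \<noteq> k"
  proof -
    have "card {i, j, k} = 3" using ijk by simp
    then show "i \<noteq> j" "i \<noteq> k" "j \<noteq> k" by (auto simp: card_insert_if split: if_splits)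
  qed
  have mi: "n i \<notin> gen2 (n j) (n k)"
    using mem dist minimal gen2_sym by auto
  show ?thesis unfolding Let_def
    by (rule mainset) (use pos mem coprime dist mi in auto)
qed

end
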